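(* Let $\mathbb{G}$ be a unicellular fatgraph, let $\tilde{\mathbb{G}}$ be obtained from $\mathbb{G}$ by an $i,j$-reversal, and let $r$ be a ribbon of $\mathbb{G}$ (identified with the corresponding ribbon of $\tilde{\mathbb{G}}$). Then $r$ changes its directional status (m-ribbon versus b-ribbon) under the reversal if and only if $r$ intersects the interval $[i,j]_\gamma$.
   Context: A (rooted) fatgraph with $n$ ribbons is $\mathbb{G}=([2n+1],\sigma,\gamma,\omega)$: sectors $[2n+1]$; permutations $\sigma,\gamma$ whose cycles are vertices and boundary components, $\sigma(2n+1)=\gamma(2n+1)=1$; orientations $\omega:[2n+1]\to\{\pm1\}$ with $\omega(1)=\omega(2n+1)$. The pairs $(x,\sigma(x))$, $x\ne 2n+1$, are matched into ribbons $((x,\sigma(x)),(y,\sigma(y)))$, either untwisted ($x,\sigma(y)$ and $\sigma(x),y$ $\gamma$-consecutive, $\omega(x)=\omega(\sigma(y))$, $\omega(\sigma(x))=\omega(y)$) or twisted ($x,y$ and $\sigma(x),\sigma(y)$ $\gamma$-consecutive, $\omega(x)=-\omega(y)$, $\omega(\sigma(x))=-\omega(\sigma(y))$). An m-ribbon has $\omega(x)=-\omega(\sigma(x))$, $\omega(y)=-\omega(\sigma(y))$; a b-ribbon has $\omega(x)=\omega(\sigma(x))$, $\omega(y)=\omega(\sigma(y))$. Flipping a vertex reverses its cyclic order and negates its sectors' orientations. Unicellular: $\gamma=(1,\dots,2n+1)$, with order $<_\gamma$ given by $1<\dots<2n+1$; $[i,j]_\gamma=\{s: i\le_\gamma s\le_\gamma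 j\}$. For a ribbon $r$, $r^L,r^R$ are the $<_\gamma$-min and max of its four sectors. A ribbon $r$ intersects $[i,j]_\gamma$ if $r^L<_\gamma i<_\gamma r^R\le_\gamma j$ or $i\le_\gamma r^L<_\gamma j<_\gamma r^R$. Reversals for sectors $i<_\gamma j$ (sector labels preserved, so ribbons of $\mathbb{G}$ and of the result correspond naturally): gluing (distinct vertices $(i,i_1,\dots,i_p),(j,j_1,\dots,j_q)$, after flipping $\omega(i)=-\omega(j)$, become $(i,j_1,\dots,j_q,j,i_1,\dots,i_p)$); slicing (vertex $(i,j_1,\dots,j_q,j,i_1,\dots,i_p)$ with $\omega(i)=-\omega(j)$ becomes $(i,i_1,\dots,i_p)$ and $(j,j_1,\dots,j_q)$); half-flipping (same vertex with $\omega(i)=\omega(j)$: split, flip $(j,j_1,\dots,j_q)$, glue back along $i,j$, giving $(i,j_q,\dots,j_1,j,i_1,\dots,i_p)$). *)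

theory Defs
  imports "HOL-Combinatorics.Combinatorics"
begin

(* Sectors are [2n+1] = {1..2n+1}; sigma (vertices) and gamma (boundary      *)
(* components) are permutations of the sectors; omega : sectors -> {1,-1}.  *)
(* The pairs (x, sigma x), x ~= 2n+1, are matched into ribbons; we encode    *)
(* the matching by a fixed-point-free involution eps on {1..2n}: the ribbon  *)
(* of x is ((x, sigma x), (eps x, sigma (eps x))).                           *)

definition sectors :: "nat \<Rightarrow> nat set" where
  "sectors n = {1..2*n+1}"

definition gamma_consec :: "(nat \<Rightarrow> nat) \<Rightarrow> nat \<Rightarrow> nat \<Rightarrow> bool" where
  "gamma_consec \<gamma> a b \<longleftrightarrow> \<gamma> a = b \<or> \<gamma> b = a"

definition untwisted_ribbon ::
  "(nat \<Rightarrow> nat) \<Rightarrow> (nat \<Rightarrow> nat) \<Rightarrow> (nat \<Rightarrow> int) \<Rightarrow> nat \<Rightarrow> nat \<Rightarrow> bool" where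
  "untwisted_ribbon \<sigma> \<gamma> \<omega> x y \<longleftrightarrow>
     gamma_consec \<gamma> x (\<sigma> y) \<and> gamma_consec \<gamma> (\<sigma> x) y \<and>
     \<omega> x = \<omega> (\<sigma> y) \<and> \<omega> (\<sigma> x) = \<omega> y"

definition twisted_ribbon ::
  "(nat \<Rightarrow> nat) \<Rightarrow> (nat \<Rightarrow> nat) \<Rightarrow> (nat \<Rightarrow> int) \<Rightarrow> nat \<Rightarrow> nat \<Rightarrow> bool" where
  "twisted_ribbon \<sigma> \<gamma> \<omega> x y \<longleftrightarrow>
     gamma_consec \<gamma> x y \<and> gamma_consec \<gamma> (\<sigma> x) (\<sigma> y) \<and>
     \<omega> x = - \<omega> y \<and> \<omega> (\<sigma> x) = - \<omega> (\<sigma> y)"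

definition fatgraph ::
  "nat \<Rightarrow> (nat \<Rightarrow> nat) \<Rightarrow> (nat \<Rightarrow> nat) \<Rightarrow> (nat \<Rightarrow> int) \<Rightarrow> (nat \<Rightarrow> nat) \<Rightarrow> bool" where
  "fatgraph n \<sigma> \<gamma> \<omega> \<epsilon> \<longleftrightarrow>
     \<sigma> permutes sectors n \<and> \<gamma> permutes sectors n \<and>
     \<sigma> (2*n+1) = 1 \<and> \<gamma> (2*n+1) = 1 \<and>
     (\<forall>s\<in>sectors n. \<omega> s = 1 \<or> \<omega> s = -1) \<and> \<omega> 1 = \<omega> (2*n+1) \<and>
     (\<forall>x\<in>{1..2*n}. \<epsilon> x \<in> {1..2*n} \<and> \<epsilon> x \<noteq> x \<and> \<epsilon> (\<epsilon> x) = x) \<and>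
     (\<forall>x\<in>{1..2*n}. untwisted_ribbon \<sigma> \<gamma> \<omega> x (\<epsilon> x) \<or> twisted_ribbon \<sigma> \<gamma> \<omega> x (\<epsilon> x))"

definition unicellular :: "nat \<Rightarrow> (nat \<Rightarrow> nat) \<Rightarrow> bool" where
  "unicellular n \<gamma> \<longleftrightarrow> (\<forall>s\<in>{1..2*n}. \<gamma> s = s + 1) \<and> \<gamma> (2*n+1) = 1"

(* A ribbon ((x, sigma x), (y, sigma y)) is represented by the set {x, y}
   of the first components of its two pairs. *)
definition ribbons :: "nat \<Rightarrow> (nat \<Rightarrow> nat) \<Rightarrow> nat set set" where
  "ribbons n \<epsilon> = {{x, \<epsilon> x} | x. x \<in> {1..2*n}}"

definition ribbon_sectors :: "(nat \<Rightarrow> nat) \<Rightarrow> nat set \<Rightarrow> nat set" where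
  "ribbon_sectors \<sigma> r = r \<union> \<sigma> ` r"

definition m_ribbon :: "(nat \<Rightarrow> nat) \<Rightarrow> (nat \<Rightarrow> int) \<Rightarrow> nat set \<Rightarrow> bool" where
  "m_ribbon \<sigma> \<omega> r \<longleftrightarrow> (\<forall>x\<in>r. \<omega> x = - \<omega> (\<sigma> x))"

definition b_ribbon :: "(nat \<Rightarrow> nat) \<Rightarrow> (nat \<Rightarrow> int) \<Rightarrow> nat set \<Rightarrow> bool" where
  "b_ribbon \<sigma> \<omega> r \<longleftrightarrow> (\<forall>x\<in>r. \<omega> x = \<omega> (\<sigma> x))"

(* For unicellular G, <_gamma is the usual order on {1..2n+1}. *)
definition ribbon_L :: "(nat \<Rightarrow> nat) \<Rightarrow> nat set \<Rightarrow> nat" where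
  "ribbon_L \<sigma> r = Min (ribbon_sectors \<sigma> r)"

definition ribbon_R :: "(nat \<Rightarrow> nat) \<Rightarrow> nat set \<Rightarrow> nat" where
  "ribbon_R \<sigma> r = Max (ribbon_sectors \<sigma> r)"

definition intersects :: "(nat \<Rightarrow> nat) \<Rightarrow> nat set \<Rightarrow> nat \<Rightarrow> nat \<Rightarrow> bool" where
  "intersects \<sigma> r i j \<longleftrightarrow>
     (ribbon_L \<sigma> r < i \<and> i < ribbon_R \<sigma> r \<and> ribbon_R \<sigma> r \<le> j) \<or>
     (i \<le> ribbon_L \<sigma> r \<and> ribbon_L \<sigma> r < j \<and> j < ribbon_R \<sigma> r)"

(* Reversals.  Besides sigma and omega we track, for every pair (x, sigma x) *)
(* of the original fatgraph, the first component tau x of the corresponding *)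
(* pair (tau x, sigma' (tau x)) of the current fatgraph (sector labels are   *)
(* preserved; the pairs = half-edges are carried along physically).          *)

definition vertex :: "(nat \<Rightarrow> nat) \<Rightarrow> nat \<Rightarrow> nat set" where
  "vertex \<sigma> x = {(\<sigma> ^^ k) x | k. True}"

definition flip_sigma :: "nat set \<Rightarrow> (nat \<Rightarrow> nat) \<Rightarrow> nat \<Rightarrow> nat" where
  "flip_sigma V \<sigma> x = (if x \<in> V then inv \<sigma> x else \<sigma> x)"

definition flip_omega :: "nat set \<Rightarrow> (nat \<Rightarrow> int) \<Rightarrow> nat \<Rightarrow> int" where
  "flip_omega V \<omega> x = (if x \<in> V then - \<omega> x else \<omega> x)"

(* the pair (t, sigma t) at a flipped vertex becomes (sigma t, t) *)
definition flip_tau :: "nat set \<Rightarrow> (nat \<Rightarrow> nat) \<Rightarrow> (nat \<Rightarrow> nat) \<Rightarrow> nat \<Rightarrow> nat" where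
  "flip_tau V \<sigma> \<tau> h = (if \<tau> h \<in> V then \<sigma> (\<tau> h) else \<tau> h)"

(* gluing (i,i1..ip),(j,j1..jq) into (i,j1..jq,j,i1..ip), and slicing
   (i,j1..jq,j,i1..ip) into (i,i1..ip),(j,j1..jq), are both sigma o (i j);
   the pair (i,i1) becomes (j,i1) and (j,j1) becomes (i,j1). *)
definition cut_sigma :: "nat \<Rightarrow> nat \<Rightarrow> (nat \<Rightarrow> nat) \<Rightarrow> nat \<Rightarrow> nat" where
  "cut_sigma i j \<sigma> = \<sigma> \<circ> transpose i j"

definition cut_tau :: "nat \<Rightarrow> nat \<Rightarrow> (nat \<Rightarrow> nat) \<Rightarrow> nat \<Rightarrow> nat" where
  "cut_tau i j \<tau> = transpose i j \<circ> \<tau>"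

definition negate_on :: "nat set \<Rightarrow> (nat \<Rightarrow> int) \<Rightarrow> nat \<Rightarrow> int" where
  "negate_on A \<omega> x = (if x \<in> A then - \<omega> x else \<omega> x)"

(* Orientation of the resulting fatgraph: the
   reversal reverses the direction in which the boundary traverses the
   segment between i and j, so the sector orientations there are those
   induced by the new boundary.  c = omega 1 is the global orientation
   convention of the original fatgraph. *)
definition reorient_gs :: "int \<Rightarrow> nat \<Rightarrow> nat \<Rightarrow> (nat \<Rightarrow> int) \<Rightarrow> nat \<Rightarrow> int" where
  "reorient_gs c i j \<omega> = negate_on (if \<omega> i = c then {i<..<j} else {i..j}) \<omega>"

definition reorient_hf :: "int \<Rightarrow> nat \<Rightarrow> nat \<Rightarrow> (nat \<Rightarrow> int) \<Rightarrow> nat \<Rightarrow> int" where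
  "reorient_hf c i j \<omega> = negate_on (if \<omega> i = c then {i<..j} else {i..<j}) \<omega>"

definition reversal ::
  "nat \<Rightarrow> (nat \<Rightarrow> nat) \<Rightarrow> (nat \<Rightarrow> int) \<Rightarrow> nat \<Rightarrow> nat \<Rightarrow>
   (nat \<Rightarrow> nat) \<Rightarrow> (nat \<Rightarrow> int) \<Rightarrow> (nat \<Rightarrow> nat) \<Rightarrow> bool" where
  "reversal n \<sigma> \<omega> i j \<sigma>' \<omega>' \<tau> \<longleftrightarrow>
     i \<in> sectors n \<and> j \<in> sectors n \<and> i < j \<and>
     ( \<comment> \<open>gluing: distinct vertices, possibly after flipping one of them\<close>
       (j \<notin> vertex \<sigma> i \<and>
        (\<exists>V\<in>{{}, vertex \<sigma> i, vertex \<sigma> j}.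
           flip_omega V \<omega> i = - flip_omega V \<omega> j \<and>
           \<sigma>' = cut_sigma i j (flip_sigma V \<sigma>) \<and>
           \<tau> = cut_tau i j (flip_tau V \<sigma> id) \<and>
           \<omega>' = reorient_gs (\<omega> 1) i j (flip_omega V \<omega>)))
     \<or> \<comment> \<open>slicing\<close>
       (j \<in> vertex \<sigma> i \<and> \<omega> i = - \<omega> j \<and>
        \<sigma>' = cut_sigma i j \<sigma> \<and> \<tau> = cut_tau i j id \<and>
        \<omega>' = reorient_gs (\<omega> 1) i j \<omega>)
     \<or> \<comment> \<open>half-flipping: slice, flip the vertex of j, glue back along i, j\<close>
       (j \<in> vertex \<sigma> i \<and> \<omega> i = \<omega> j \<and>
        (let \<sigma>1 = cut_sigma i j \<sigma>; \<tau>1 = cut_tau i j id; W = vertex \<sigma>1 j in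
         \<sigma>' = cut_sigma i j (flip_sigma W \<sigma>1) \<and>
         \<tau> = cut_tau i j (flip_tau W \<sigma>1 \<tau>1) \<and>
         \<omega>' = reorient_hf (\<omega> 1) i j (flip_omega W \<omega>))))"

end

theory Submission
  imports Defs
begin

definition inn :: "nat \<Rightarrow> nat \<Rightarrow> bool \<Rightarrow> bool \<Rightarrow> nat \<Rightarrow> bool" where
  "inn i j p q h \<longleftrightarrow> (i < h \<and> h < j) \<or> (h = i \<and> p) \<or> (h = j \<and> q)"

definition sg :: "bool \<Rightarrow> int" where "sg b = (if b then -1 else 1)"

lemma sg_mult: "sg a * sg b = sg (a \<noteq> b)" by (simp add: sg_def)

lemma pm_sq: "(a::int) = 1 \<or> a = -1 \<Longrightarrow> a * a = 1" by auto

lemma negate_on_sg: "negate_on A f x = sg (x \<in> A) * f x"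
  by (simp add: negate_on_def sg_def)

lemma flip_omega_sg: "flip_omega A f x = sg (x \<in> A) * f x"
  by (simp add: flip_omega_def sg_def)

lemma change_iff:
  assumes "(s::int) = 1 \<or> s = -1" "s' = sg b * s"
  shows "(s \<noteq> s') = b"
  using assms by (auto simp: sg_def)

lemma glue_change:
  fixes \<sigma> :: "nat \<Rightarrow> nat" and \<omega> :: "nat \<Rightarrow> int"
  assumes V: "(\<sigma> h \<in> V) = (h \<in> V)"
    and invs: "inv \<sigma> (\<sigma> h) = h"
    and ij: "i < j"
    and Vij: "(i \<in> V \<and> j \<notin> V) \<or> (i \<notin> V \<and> j \<in> V) \<or> (i \<notin> V \<and> j \<notin> V)"
    and w: "\<omega> h = 1 \<or> \<omega> h = -1" "\<omega> (\<sigma> h) = 1 \<or> \<omega> (\<sigma> h) = -1"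
       "\<omega> i = 1 \<or> \<omega> i = -1" "\<omega> j = 1 \<or> \<omega> j = -1" "c = 1 \<or> c = -1"
    and fl: "flip_omega V \<omega> i = - flip_omega V \<omega> j"
    and s': "\<sigma>' = cut_sigma i j (flip_sigma V \<sigma>)"
    and t': "\<tau> = cut_tau i j (flip_tau V \<sigma> id)"
    and w': "\<omega>' = reorient_gs c i j (flip_omega V \<omega>)"
  shows "(\<omega> h * \<omega> (\<sigma> h) \<noteq> \<omega>' (\<tau> h) * \<omega>' (\<sigma>' (\<tau> h))) =
         (inn i j (\<omega> i = c) (\<omega> j \<noteq> c) h \<noteq> inn i j (\<omega> i \<noteq> c) (\<omega> j = c) (\<sigma> h))"
proof -
  define a where "a = (if h \<in> V then \<sigma> h else h)"
  define b where "b = (if h \<in> V then h else \<sigma> h)"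
  define \<phi> where "\<phi> = flip_omega V \<omega>"
  define D where "D = (if \<phi> i = c then {i<..<j} else {i..j})"
  have st: "\<sigma>' (\<tau> h) = b"
    using V invs by (simp add: s' t' cut_sigma_def cut_tau_def flip_sigma_def flip_tau_def b_def)
  have tt: "\<tau> h = transpose i j a"
    by (simp add: t' cut_tau_def flip_tau_def a_def)
  note st' = st
  have w'': "\<omega>' x = sg (x \<in> D) * \<phi> x" for x
    by (simp add: w' reorient_gs_def negate_on_sg D_def \<phi>_def)
  have Dtr: "(transpose i j a \<in> D) = (a \<in> D)"
    using ij by (auto simp: D_def transpose_def)
  have phtr: "\<phi> (transpose i j a) = sg (a = i \<or> a = j) * \<phi> a"
  proof -
    have fl': "\<phi> i = - \<phi> j" using fl by (simp add: \<phi>_def)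
    show ?thesis
    proof (cases "a = i")
      case True then show ?thesis using fl' ij by (simp add: sg_def)
    next
      case False then show ?thesis using fl' by (cases "a = j") (simp_all add: sg_def)
    qed
  qed
  have phab: "\<phi> a * \<phi> b = \<omega> h * \<omega> (\<sigma> h)"
    using V by (cases "h \<in> V") (auto simp: a_def b_def \<phi>_def flip_omega_sg sg_def)
  have "\<omega>' (\<tau> h) * \<omega>' (\<sigma>' (\<tau> h)) = sg (((a \<in> D) \<noteq> (b \<in> D)) \<noteq> (a = i \<or> a = j)) * (\<omega> h * \<omega> (\<sigma> h))"
    unfolding tt st'[unfolded tt] w'' Dtr phtr phab[symmetric]
    by (simp add: sg_def)
  then have ch: "(\<omega> h * \<omega> (\<sigma> h) \<noteq> \<omega>' (\<tau> h) * \<omega>' (\<sigma>' (\<tau> h))) = (((a \<in> D) \<noteq> (b \<in> D)) \<noteq> (a = i \<or> a = j))"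
    by (intro change_iff) (use w in auto)
  define E where "E = (\<phi> i = c)"
  define P where "P = (\<omega> i = c)"
  define Q where "Q = (\<omega> j \<noteq> c)"
  have ch2: "(((a \<in> D) \<noteq> (b \<in> D)) \<noteq> (a = i \<or> a = j)) = (inn i j E E a \<noteq> inn i j (\<not>E) (\<not>E) b)"
    unfolding D_def E_def inn_def using ij by auto
  have EP1: "i \<notin> V \<Longrightarrow> E = P" unfolding E_def P_def \<phi>_def flip_omega_def by simp
  have EQ1: "j \<notin> V \<Longrightarrow> E = Q" using fl w unfolding E_def Q_def \<phi>_def flip_omega_def by auto
  have EP2: "i \<in> V \<Longrightarrow> (\<not>E) = P" using w unfolding E_def P_def \<phi>_def flip_omega_def by auto
  have EQ2: "j \<in> V \<Longrightarrow> (\<not>E) = Q" using fl w unfolding E_def Q_def \<phi>_def flip_omega_def by auto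
  have inn1: "x \<notin> V \<Longrightarrow> inn i j E E x = inn i j P Q x" for x
    using EP1 EQ1 unfolding inn_def by auto
  have inn1': "x \<notin> V \<Longrightarrow> inn i j (\<not>E) (\<not>E) x = inn i j (\<not>P) (\<not>Q) x" for x
    using EP1 EQ1 unfolding inn_def by auto
  have inn2: "x \<in> V \<Longrightarrow> inn i j (\<not>E) (\<not>E) x = inn i j P Q x" for x
    using EP2 EQ2 unfolding inn_def by auto
  have inn2': "x \<in> V \<Longrightarrow> inn i j E E x = inn i j (\<not>P) (\<not>Q) x" for x
    using EP2 EQ2 unfolding inn_def by auto
  have fin: "(inn i j E E a \<noteq> inn i j (\<not>E) (\<not>E) b) = (inn i j P Q h \<noteq> inn i j (\<not>P) (\<not>Q) (\<sigma> h))"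
  proof (cases "h \<in> V")
    case True
    then show ?thesis using V inn2[of h] inn2'[of "\<sigma> h"] unfolding a_def b_def by auto
  next
    case False
    then show ?thesis using V inn1[of h] inn1'[of "\<sigma> h"] unfolding a_def b_def by auto
  qed
  show ?thesis unfolding ch ch2 fin P_def Q_def by simp
qed

lemma hf_change:
  fixes \<sigma> :: "nat \<Rightarrow> nat" and \<omega> :: "nat \<Rightarrow> int"
  assumes W: "(\<sigma> h \<in> W) = (transpose i j h \<in> W)"
    and invs: "inv (\<sigma> \<circ> transpose i j) (\<sigma> h) = transpose i j h"
    and ij: "i < j" and iW: "i \<notin> W" and jW: "j \<in> W"
    and w: "\<omega> h = 1 \<or> \<omega> h = -1" "\<omega> (\<sigma> h) = 1 \<or> \<omega> (\<sigma> h) = -1"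
       "\<omega> i = 1 \<or> \<omega> i = -1" "\<omega> j = 1 \<or> \<omega> j = -1" "c = 1 \<or> c = -1"
    and eq: "\<omega> i = \<omega> j"
    and s': "\<sigma>' = cut_sigma i j (flip_sigma W (cut_sigma i j \<sigma>))"
    and t': "\<tau> = cut_tau i j (flip_tau W (cut_sigma i j \<sigma>) (cut_tau i j id))"
    and w': "\<omega>' = reorient_hf c i j (flip_omega W \<omega>)"
  shows "(\<omega> h * \<omega> (\<sigma> h) \<noteq> \<omega>' (\<tau> h) * \<omega>' (\<sigma>' (\<tau> h))) =
         (inn i j (\<omega> i = c) (\<omega> j \<noteq> c) h \<noteq> inn i j (\<omega> i \<noteq> c) (\<omega> j = c) (\<sigma> h))"
proof -
  define th where "th = transpose i j h"
  define a where "a = (if th \<in> W then transpose i j (\<sigma> h) else h)"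
  define b where "b = (if th \<in> W then th else \<sigma> h)"
  define \<phi> where "\<phi> = flip_omega W \<omega>"
  define P where "P = (\<omega> i = c)"
  define D where "D = (if P then {i<..j} else {i..<j})"
  have trtr: "transpose i j (transpose i j x) = x" for x by simp
  have s1: "cut_sigma i j \<sigma> (transpose i j x) = \<sigma> x" for x
    by (simp add: cut_sigma_def)
  have tt: "\<tau> h = a"
    unfolding t' cut_tau_def flip_tau_def a_def th_def
    by (simp add: s1)
  have st: "\<sigma>' a = b"
  proof (cases "th \<in> W")
    case True
    then have "\<sigma> h \<in> W" using W th_def by simp
    then show ?thesis using True invs
      by (simp add: a_def b_def s' cut_sigma_def flip_sigma_def th_def)
  next
    case False
    then have "\<sigma> h \<notin> W" using W th_def by simp
    then show ?thesis using False
      by (simp add: a_def b_def s' cut_sigma_def flip_sigma_def th_def)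
  qed
  have Pi: "\<phi> i = \<omega> i" using iW by (simp add: \<phi>_def flip_omega_def)
  have w'': "\<omega>' x = sg (x \<in> D) * \<phi> x" for x
    by (simp add: w' reorient_hf_def negate_on_sg D_def \<phi>_def[symmetric] Pi P_def)
  have wtr: "\<omega> (transpose i j x) = \<omega> x" for x
    using eq by (simp add: transpose_def)
  have phab: "\<phi> a * \<phi> b = sg (if th \<in> W then \<sigma> h = j else h = j) * (\<omega> h * \<omega> (\<sigma> h))"
  proof (cases "th \<in> W")
    case True
    then have sW: "\<sigma> h \<in> W" using W th_def by simp
    then have "\<sigma> h \<noteq> i" using iW by auto
    then have "(transpose i j (\<sigma> h) \<in> W) = (\<sigma> h \<noteq> j)"
      using sW iW by (auto simp: transpose_def)
    then show ?thesis using True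
      by (simp add: a_def b_def \<phi>_def flip_omega_sg th_def wtr sg_def)
  next
    case False
    then have sW: "\<sigma> h \<notin> W" using W th_def by simp
    have "(h \<in> W) = (h = j)" using False iW jW by (auto simp: th_def transpose_def split: if_splits)
    then show ?thesis using False sW
      by (simp add: a_def b_def \<phi>_def flip_omega_sg sg_def)
  qed
  have "\<omega>' (\<tau> h) * \<omega>' (\<sigma>' (\<tau> h)) = sg (((a \<in> D) \<noteq> (b \<in> D)) \<noteq> (if th \<in> W then \<sigma> h = j else h = j)) * (\<omega> h * \<omega> (\<sigma> h))"
    unfolding tt st w''
    by (simp add: sg_def phab[unfolded sg_def] algebra_simps split: if_splits)
  then have ch: "(\<omega> h * \<omega> (\<sigma> h) \<noteq> \<omega>' (\<tau> h) * \<omega>' (\<sigma>' (\<tau> h))) = (((a \<in> D) \<noteq> (b \<in> D)) \<noteq> (if th \<in> W then \<sigma> h = j else h = j))"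
    by (intro change_iff) (use w in auto)
  have Q: "(\<omega> j \<noteq> c) = (\<not> P)" using eq P_def by simp
  have fin: "(((a \<in> D) \<noteq> (b \<in> D)) \<noteq> (if th \<in> W then \<sigma> h = j else h = j)) = (inn i j P (\<not>P) h \<noteq> inn i j (\<not>P) P (\<sigma> h))"
  proof (cases "th \<in> W")
    case True
    then have sW: "\<sigma> h \<in> W" using W th_def by simp
    then have "\<sigma> h \<noteq> i" using iW by auto
    moreover have "h \<noteq> j" using True iW by (auto simp: th_def)
    ultimately show ?thesis using True ij
      by (auto simp: a_def b_def D_def inn_def th_def transpose_def)
  next
    case False
    have "h \<noteq> i" using False jW by (auto simp: th_def)
    then show ?thesis using False ij
      by (auto simp: a_def b_def D_def inn_def th_def transpose_def)
  qed
  show ?thesis unfolding ch fin P_def using eq by simp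
qed

lemma side_plus:
  assumes "(p = s + 1 \<and> a) \<or> (p + 1 = s \<and> \<not> a)" "i = s \<longrightarrow> P = a" "j = s \<longrightarrow> Q = (\<not> a)" "i < j"
  shows "inn i j P Q s = (i \<le> min s p \<and> min s p < j)"
  using assms unfolding inn_def by auto

lemma side_minus:
  assumes "(m + 1 = s \<and> a) \<or> (m = s + 1 \<and> \<not> a)" "i = s \<longrightarrow> P = a" "j = s \<longrightarrow> Q = (\<not> a)" "i < j"
  shows "inn i j (\<not>P) (\<not>Q) s = (i \<le> min s m \<and> min s m < j)"
  using assms unfolding inn_def by auto

lemma links_intersect:
  fixes s1 s2 i j :: nat
  assumes "s1 \<noteq> s2" "i < j"
  shows "((i \<le> s1 \<and> s1 < j) \<noteq> (i \<le> s2 \<and> s2 < j)) =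
    ((min s1 s2 < i \<and> i < max s1 s2 + 1 \<and> max s1 s2 + 1 \<le> j) \<or>
     (i \<le> min s1 s2 \<and> min s1 s2 < j \<and> j < max s1 s2 + 1))"
  using assms by (cases "s1 < s2") (auto simp: min_def max_def)

lemma final_tw:
  fixes \<omega> :: "nat \<Rightarrow> int"
  assumes c: "c = 1 \<or> c = -1" and ij: "i < j"
    and gx: "(y = x + 1 \<and> \<omega> x = c) \<or> (y + 1 = x \<and> \<omega> x = - c)"
    and gy: "(x = y + 1 \<and> \<omega> y = c) \<or> (x + 1 = y \<and> \<omega> y = - c)"
    and hx: "(sy + 1 = sx \<and> \<omega> sx = c) \<or> (sy = sx + 1 \<and> \<omega> sx = - c)"
    and hy: "(sx + 1 = sy \<and> \<omega> sy = c) \<or> (sx = sy + 1 \<and> \<omega> sy = - c)"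
  shows "((inn i j (\<omega> i = c) (\<omega> j \<noteq> c) x \<noteq> inn i j (\<omega> i \<noteq> c) (\<omega> j = c) sx) \<and>
          (inn i j (\<omega> i = c) (\<omega> j \<noteq> c) y \<noteq> inn i j (\<omega> i \<noteq> c) (\<omega> j = c) sy)) =
         ((min (min x sx) (min y sy) < i \<and> i < max (max x sx) (max y sy) \<and> max (max x sx) (max y sy) \<le> j) \<or>
          (i \<le> min (min x sx) (min y sy) \<and> min (min x sx) (min y sy) < j \<and> j < max (max x sx) (max y sy)))"
proof -
  have cn: "c \<noteq> - c" using c by auto
  have neg: "\<omega> s = - c \<Longrightarrow> \<omega> s \<noteq> c" for s using cn by auto
  define s1 where "s1 = min x y"
  define s2 where "s2 = min sx sy"
  have gx': "(y = x + 1 \<and> \<omega> x = c) \<or> (y + 1 = x \<and> \<not> \<omega> x = c)" using gx neg by blast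
  have gy': "(x = y + 1 \<and> \<omega> y = c) \<or> (x + 1 = y \<and> \<not> \<omega> y = c)" using gy neg by blast
  have hx': "(sy + 1 = sx \<and> \<omega> sx = c) \<or> (sy = sx + 1 \<and> \<not> \<omega> sx = c)" using hx neg by blast
  have hy': "(sx + 1 = sy \<and> \<omega> sy = c) \<or> (sx = sy + 1 \<and> \<not> \<omega> sy = c)" using hy neg by blast
  have e1: "inn i j (\<omega> i = c) (\<omega> j \<noteq> c) x = (i \<le> s1 \<and> s1 < j)"
    unfolding s1_def by (rule side_plus[OF gx']) (use ij in auto)
  have e2: "inn i j (\<omega> i = c) (\<omega> j \<noteq> c) y = (i \<le> s1 \<and> s1 < j)"
    unfolding s1_def min.commute[of x y] by (rule side_plus[OF gy']) (use ij in auto)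
  have e3: "inn i j (\<not> \<omega> i = c) (\<not> \<omega> j \<noteq> c) sx = (i \<le> s2 \<and> s2 < j)"
    unfolding s2_def by (rule side_minus[OF hx']) (use ij in auto)
  have e4: "inn i j (\<not> \<omega> i = c) (\<not> \<omega> j \<noteq> c) sy = (i \<le> s2 \<and> s2 < j)"
    unfolding s2_def min.commute[of sx sy] by (rule side_minus[OF hy']) (use ij in auto)
  have ne: "s1 \<noteq> s2"
  proof
    assume "s1 = s2"
    then show False using gx' gy' hx' hy' unfolding s1_def s2_def by (auto simp: min_def split: if_splits)
  qed
  have mn: "min (min x sx) (min y sy) = min s1 s2" unfolding s1_def s2_def by linarith
  have mx: "max (max x sx) (max y sy) = max s1 s2 + 1" unfolding s1_def s2_def using gx hx by linarith
  show ?thesis unfolding mn mx using e1 e2 e3 e4 links_intersect[OF ne ij] by simp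
qed

lemma final_untw:
  fixes \<omega> :: "nat \<Rightarrow> int"
  assumes c: "c = 1 \<or> c = -1" and ij: "i < j" and xy: "x \<noteq> y" "sx \<noteq> sy"
    and gx: "(sy = x + 1 \<and> \<omega> x = c) \<or> (sy + 1 = x \<and> \<omega> x = - c)"
    and gy: "(sx = y + 1 \<and> \<omega> y = c) \<or> (sx + 1 = y \<and> \<omega> y = - c)"
    and hx: "(y + 1 = sx \<and> \<omega> sx = c) \<or> (y = sx + 1 \<and> \<omega> sx = - c)"
    and hy: "(x + 1 = sy \<and> \<omega> sy = c) \<or> (x = sy + 1 \<and> \<omega> sy = - c)"
  shows "((inn i j (\<omega> i = c) (\<omega> j \<noteq> c) x \<noteq> inn i j (\<omega> i \<noteq> c) (\<omega> j = c) sx) \<and>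
          (inn i j (\<omega> i = c) (\<omega> j \<noteq> c) y \<noteq> inn i j (\<omega> i \<noteq> c) (\<omega> j = c) sy)) =
         ((min (min x sx) (min y sy) < i \<and> i < max (max x sx) (max y sy) \<and> max (max x sx) (max y sy) \<le> j) \<or>
          (i \<le> min (min x sx) (min y sy) \<and> min (min x sx) (min y sy) < j \<and> j < max (max x sx) (max y sy)))"
proof -
  have cn: "c \<noteq> - c" using c by auto
  have neg: "\<omega> s = - c \<Longrightarrow> \<omega> s \<noteq> c" for s using cn by auto
  define s1 where "s1 = min x sy"
  define s2 where "s2 = min sx y"
  have gx': "(sy = x + 1 \<and> \<omega> x = c) \<or> (sy + 1 = x \<and> \<not> \<omega> x = c)" using gx neg by blast
  have gy': "(sx = y + 1 \<and> \<omega> y = c) \<or> (sx + 1 = y \<and> \<not> \<omega> y = c)" using gy neg by blast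
  have hx': "(y + 1 = sx \<and> \<omega> sx = c) \<or> (y = sx + 1 \<and> \<not> \<omega> sx = c)" using hx neg by blast
  have hy': "(x + 1 = sy \<and> \<omega> sy = c) \<or> (x = sy + 1 \<and> \<not> \<omega> sy = c)" using hy neg by blast
  have e1: "inn i j (\<omega> i = c) (\<omega> j \<noteq> c) x = (i \<le> s1 \<and> s1 < j)"
    unfolding s1_def by (rule side_plus[OF gx']) (use ij in auto)
  have e2: "inn i j (\<omega> i = c) (\<omega> j \<noteq> c) y = (i \<le> s2 \<and> s2 < j)"
    unfolding s2_def min.commute[of sx y] by (rule side_plus[OF gy']) (use ij in auto)
  have e3: "inn i j (\<not> \<omega> i = c) (\<not> \<omega> j \<noteq> c) sx = (i \<le> s2 \<and> s2 < j)"
    unfolding s2_def by (rule side_minus[OF hx']) (use ij in auto)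
  have e4: "inn i j (\<not> \<omega> i = c) (\<not> \<omega> j \<noteq> c) sy = (i \<le> s1 \<and> s1 < j)"
    unfolding s1_def min.commute[of x sy] by (rule side_minus[OF hy']) (use ij in auto)
  have ne: "s1 \<noteq> s2"
  proof
    assume "s1 = s2"
    then show False using xy gx' gy' hx' hy' unfolding s1_def s2_def by (auto simp: min_def split: if_splits)
  qed
  have mn: "min (min x sx) (min y sy) = min s1 s2" unfolding s1_def s2_def by linarith
  have mx: "max (max x sx) (max y sy) = max s1 s2 + 1" unfolding s1_def s2_def using gx hx by linarith
  show ?thesis unfolding mn mx using e1 e2 e3 e4 links_intersect[OF ne ij] by auto
qed

lemma vertex_orbit: "permutation f \<Longrightarrow> vertex f x = orbit f x"
  by (simp add: vertex_def orbit_altdef_permutation)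

lemma vertex_self: "x \<in> vertex f x"
  unfolding vertex_def by (auto intro: exI[of _ 0])

lemma vertex_step:
  assumes "permutation f"
  shows "(f h \<in> vertex f x) = (h \<in> vertex f x)"
proof
  assume "h \<in> vertex f x"
  then obtain k where "h = (f ^^ k) x" by (auto simp: vertex_def)
  then have "f h = (f ^^ Suc k) x" by simp
  then show "f h \<in> vertex f x" unfolding vertex_def by blast
next
  assume a: "f h \<in> vertex f x"
  have "h \<in> orbit f h" by (rule permutation_self_in_orbit[OF assms])
  then have "h \<in> orbit f (f h)" using permutation_orbit_step[OF assms, of h] by simp
  moreover have "f h \<in> orbit f x" using a vertex_orbit[OF assms] by simp
  ultimately have "h \<in> orbit f x" by (rule orbit_trans)
  then show "h \<in> vertex f x" using vertex_orbit[OF assms] by simp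
qed

lemma vertex_sym:
  assumes "permutation f" "j \<notin> vertex f i"
  shows "i \<notin> vertex f j"
proof
  assume "i \<in> vertex f j"
  then have "i \<in> orbit f j" using vertex_orbit[OF assms(1)] by simp
  moreover have "j \<in> orbit f j" by (rule permutation_self_in_orbit[OF assms(1)])
  ultimately have "j \<in> orbit f i" using orbit_swap by metis
  then show False using assms vertex_orbit[OF assms(1)] by simp
qed

lemma vertex_slice:
  fixes f :: "nat \<Rightarrow> nat"
  assumes ij: "i \<noteq> j" and jv: "j \<in> vertex f i"
  shows "i \<notin> vertex (f \<circ> transpose i j) j"
proof -
  obtain k where k: "(f ^^ k) i = j" using jv by (auto simp: vertex_def)
  define k0 where "k0 = (LEAST k. (f ^^ k) i = j)"
  have k0: "(f ^^ k0) i = j" unfolding k0_def by (rule LeastI[of _ k]) (rule k)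
  have mn: "m < k0 \<Longrightarrow> (f ^^ m) i \<noteq> j" for m unfolding k0_def using not_less_Least by blast
  have k0p: "0 < k0" using k0 ij by (cases k0) auto
  have A: "(f ^^ l) i \<noteq> i" if "1 \<le> l" "l < k0" for l
  proof
    assume h: "(f ^^ l) i = i"
    have "(f ^^ (k0 - l)) i = (f ^^ (k0 - l)) ((f ^^ l) i)" using h by simp
    also have "\<dots> = (f ^^ (k0 - l + l)) i" by (simp add: funpow_add)
    also have "\<dots> = j" using that k0 by simp
    finally show False using mn[of "k0 - l"] that by simp
  qed
  define g where "g = f \<circ> transpose i j"
  have B: "\<exists>l. 1 \<le> l \<and> l \<le> k0 \<and> (g ^^ m) j = (f ^^ l) i" for m
  proof (induction m)
    case 0
    then show ?case using k0 k0p by (intro exI[of _ k0]) auto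
  next
    case (Suc m)
    then obtain l where l: "1 \<le> l" "l \<le> k0" "(g ^^ m) j = (f ^^ l) i" by blast
    have st: "(g ^^ Suc m) j = f (transpose i j ((f ^^ l) i))"
      using l(3) by (simp add: g_def)
    show ?case
    proof (cases "l = k0")
      case True
      then have "(g ^^ Suc m) j = (f ^^ 1) i" using st k0 by simp
      then show ?thesis using k0p by (intro exI[of _ 1]) auto
    next
      case False
      then have lt: "l < k0" using l by simp
      have "(f ^^ l) i \<noteq> j" using mn[OF lt] .
      moreover have "(f ^^ l) i \<noteq> i" using A l lt by simp
      ultimately have "(g ^^ Suc m) j = (f ^^ Suc l) i" using st by (simp add: transpose_def)
      then show ?thesis using lt by (intro exI[of _ "Suc l"]) auto
    qed
  qed
  show ?thesis
  proof
    assume "i \<in> vertex (f \<circ> transpose i j) j"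
    then obtain m where "i = (g ^^ m) j" by (auto simp: vertex_def g_def)
    then obtain l where l: "1 \<le> l" "l \<le> k0" "i = (f ^^ l) i" using B by metis
    show False
    proof (cases "l = k0")
      case True then show False using l k0 ij by simp
    next
      case False then show False using A[of l] l by simp
    qed
  qed
qed

locale ufg =
  fixes n :: nat and \<sigma> \<gamma> \<epsilon> :: "nat \<Rightarrow> nat" and \<omega> :: "nat \<Rightarrow> int"
  assumes fg: "fatgraph n \<sigma> \<gamma> \<omega> \<epsilon>" and uc: "unicellular n \<gamma>" and npos: "1 \<le> n"
begin

lemma sig_perm: "\<sigma> permutes {1..2*n+1}" using fg by (simp add: fatgraph_def sectors_def)
lemma gam_perm: "\<gamma> permutes {1..2*n+1}" using fg by (simp add: fatgraph_def sectors_def)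
lemma sig_in: "(\<sigma> x \<in> {1..2*n+1}) = (x \<in> {1..2*n+1})" by (rule permutes_in_image[OF sig_perm])
lemma sig_inv1: "inv \<sigma> (\<sigma> x) = x" by (rule permutes_inverses(2)[OF sig_perm])
lemma sig_inv2: "\<sigma> (inv \<sigma> x) = x" by (rule permutes_inverses(1)[OF sig_perm])
lemma sig_inj: "\<sigma> x = \<sigma> y \<Longrightarrow> x = y" by (metis sig_inv1)
lemma sigN: "\<sigma> (2*n+1) = 1" using fg by (simp add: fatgraph_def)
lemma w_pm: "s \<in> {1..2*n+1} \<Longrightarrow> \<omega> s = 1 \<or> \<omega> s = -1" using fg by (simp add: fatgraph_def sectors_def)
lemma w1N: "\<omega> (2*n+1) = \<omega> 1" using fg by (simp add: fatgraph_def)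
lemma eps: "x \<in> {1..2*n} \<Longrightarrow> \<epsilon> x \<in> {1..2*n} \<and> \<epsilon> x \<noteq> x \<and> \<epsilon> (\<epsilon> x) = x"
  using fg by (simp add: fatgraph_def)
lemma rib: "x \<in> {1..2*n} \<Longrightarrow> untwisted_ribbon \<sigma> \<gamma> \<omega> x (\<epsilon> x) \<or> twisted_ribbon \<sigma> \<gamma> \<omega> x (\<epsilon> x)"
  using fg by (simp add: fatgraph_def)
lemma gam1: "s \<in> {1..2*n} \<Longrightarrow> \<gamma> s = s + 1" using uc by (simp add: unicellular_def)
lemma gamN: "\<gamma> (2*n+1) = 1" using uc by (simp add: unicellular_def)

lemma cons_iff:
  assumes "a \<in> {1..2*n+1}" "b \<in> {1..2*n+1}"
  shows "gamma_consec \<gamma> a b \<longleftrightarrow> b = a + 1 \<or> a = b + 1 \<or> (a = 2*n+1 \<and> b = 1) \<or> (a = 1 \<and> b = 2*n+1)"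
proof -
  have g: "s \<in> {1..2*n+1} \<Longrightarrow> \<gamma> s = (if s = 2*n+1 then 1 else s + 1)" for s
    using gam1 gamN by auto
  show ?thesis using assms g[of a] g[of b] npos unfolding gamma_consec_def by auto
qed

definition tw :: "nat \<Rightarrow> bool" where "tw h = twisted_ribbon \<sigma> \<gamma> \<omega> h (\<epsilon> h)"
definition sec :: "nat \<times> bool \<Rightarrow> nat" where "sec z = (if snd z then fst z else \<sigma> (fst z))"
definition ps :: "nat \<times> bool \<Rightarrow> nat \<times> bool" where
  "ps z = (\<epsilon> (fst z), if tw (fst z) then snd z else \<not> snd z)"
definition SD :: "(nat \<times> bool) set" where "SD = {1..2*n} \<times> UNIV"

lemma tw_sym: "h \<in> {1..2*n} \<Longrightarrow> tw (\<epsilon> h) = tw h"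
  using eps[of h] unfolding tw_def twisted_ribbon_def gamma_consec_def by auto

lemma ps_SD: "z \<in> SD \<Longrightarrow> ps z \<in> SD"
  using eps unfolding SD_def ps_def by (cases z) auto

lemma ps_ps: "z \<in> SD \<Longrightarrow> ps (ps z) = z"
  using eps tw_sym unfolding SD_def ps_def by (cases z) auto

lemma ps_inj: "z \<in> SD \<Longrightarrow> z' \<in> SD \<Longrightarrow> ps z = ps z' \<Longrightarrow> z = z'"
  by (metis ps_ps)

lemma sec_SD: "z \<in> SD \<Longrightarrow> sec z \<in> {1..2*n+1}"
  using sig_in unfolding SD_def sec_def by (cases z) auto

lemma ps_cons: "z \<in> SD \<Longrightarrow> gamma_consec \<gamma> (sec z) (sec (ps z))"
proof -
  assume z: "z \<in> SD"
  obtain h b where zz: "z = (h, b)" by (cases z)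
  have h: "h \<in> {1..2*n}" using z zz by (simp add: SD_def)
  have cs: "gamma_consec \<gamma> a c = gamma_consec \<gamma> c a" for a c unfolding gamma_consec_def by auto
  show ?thesis
  proof (cases "tw h")
    case True
    then show ?thesis using zz unfolding tw_def twisted_ribbon_def sec_def ps_def by auto
  next
    case False
    then have "untwisted_ribbon \<sigma> \<gamma> \<omega> h (\<epsilon> h)" using rib[OF h] tw_def by auto
    then show ?thesis using False zz cs unfolding untwisted_ribbon_def sec_def ps_def by auto
  qed
qed

lemma ps_w: "z \<in> SD \<Longrightarrow> \<omega> (sec (ps z)) = (if snd (ps z) = snd z then - \<omega> (sec z) else \<omega> (sec z))"
proof -
  assume z: "z \<in> SD"
  obtain h b where zz: "z = (h, b)" by (cases z)
  have h: "h \<in> {1..2*n}" using z zz by (simp add: SD_def)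
  show ?thesis
  proof (cases "tw h")
    case True
    then show ?thesis using zz unfolding tw_def twisted_ribbon_def sec_def ps_def by auto
  next
    case False
    then have "untwisted_ribbon \<sigma> \<gamma> \<omega> h (\<epsilon> h)" using rib[OF h] tw_def by auto
    then show ?thesis using False zz unfolding untwisted_ribbon_def sec_def ps_def by auto
  qed
qed

lemma sides_at: "z \<in> SD \<Longrightarrow> sec z = t \<Longrightarrow> z = (t, True) \<or> z = (inv \<sigma> t, False)"
  unfolding sec_def by (cases z) (auto simp: sig_inv1 split: if_splits)

lemma plus_SD: "t \<in> {1..2*n} \<Longrightarrow> (t, True) \<in> SD \<and> sec (t, True) = t"
  by (simp add: SD_def sec_def)

lemma minus_SD: "t \<in> {2..2*n+1} \<Longrightarrow> (inv \<sigma> t, False) \<in> SD \<and> sec (inv \<sigma> t, False) = t"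
proof -
  assume t: "t \<in> {2..2*n+1}"
  have "inv \<sigma> t \<in> {1..2*n+1}" using sig_in[of "inv \<sigma> t"] t by (simp add: sig_inv2)
  moreover have "inv \<sigma> t \<noteq> 2*n+1" using t sigN sig_inv2[of t] by auto
  ultimately show ?thesis by (simp add: SD_def sec_def sig_inv2)
qed

lemma at1: "z \<in> SD \<Longrightarrow> sec z = 1 \<Longrightarrow> z = (1, True)"
proof -
  assume z: "z \<in> SD" "sec z = 1"
  obtain h b where zz: "z = (h, b)" by (cases z)
  have h: "h \<in> {1..2*n}" using z zz by (simp add: SD_def)
  show ?thesis
  proof (cases b)
    case False
    then have "\<sigma> h = \<sigma> (2*n+1)" using z zz sigN by (simp add: sec_def)
    then show ?thesis using h sig_inj by fastforce
  qed (use z zz in \<open>simp add: sec_def\<close>)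
qed

lemma atN: "z \<in> SD \<Longrightarrow> sec z = 2*n+1 \<Longrightarrow> z = (inv \<sigma> (2*n+1), False)"
proof -
  assume z: "z \<in> SD" "sec z = 2*n+1"
  obtain h b where zz: "z = (h, b)" by (cases z)
  have h: "h \<in> {1..2*n}" using z zz by (simp add: SD_def)
  show ?thesis using z zz h sides_at[OF z(1) z(2)] by auto
qed

lemma psec_range: "z \<in> SD \<Longrightarrow> sec (ps z) \<in> {1..2*n+1}"
  using sec_SD ps_SD by blast

lemma nbr_mid: "z \<in> SD \<Longrightarrow> sec z = t \<Longrightarrow> t \<in> {2..2*n} \<Longrightarrow> sec (ps z) = t + 1 \<or> sec (ps z) + 1 = t"
  using ps_cons[of z] psec_range[of z] cons_iff[of t "sec (ps z)"] by auto

lemma parity: "sec (ps (1, True)) \<noteq> 2*n+1"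
proof
  assume h1: "sec (ps (1, True)) = 2*n+1"
  have z1: "(1, True) \<in> SD" using npos by (simp add: SD_def)
  have E: "k + 2 \<le> 2*n \<Longrightarrow> z \<in> SD \<Longrightarrow> sec z = k + 2 \<Longrightarrow> sec (ps z) = (if even k then k + 3 else k + 1)" for k z
  proof (induction k arbitrary: z)
    case 0
    have "sec (ps z) = 3 \<or> sec (ps z) = 1" using nbr_mid[OF 0(2) 0(3)] 0(1) by auto
    moreover have "sec (ps z) \<noteq> 1"
    proof
      assume "sec (ps z) = 1"
      then have "ps z = (1, True)" using at1 ps_SD 0 by blast
      then have "z = ps (1, True)" using ps_ps 0 by metis
      then show False using h1 0 by simp
    qed
    ultimately show ?case by simp
  next
    case (Suc k)
    show ?case
    proof (cases "even k")
      case True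
      define u1 where "u1 = (k+2, True)"
      define u2 where "u2 = (inv \<sigma> (k+2), False)"
      have u1: "u1 \<in> SD" "sec u1 = k+2" using plus_SD[of "k+2"] Suc(2) u1_def by auto
      have u2: "u2 \<in> SD" "sec u2 = k+2" using minus_SD[of "k+2"] Suc(2) u2_def by auto
      have u12: "u1 \<noteq> u2" by (simp add: u1_def u2_def)
      have p1: "sec (ps u1) = k+3" using Suc.IH[OF _ u1] Suc(2) True by simp
      have p2: "sec (ps u2) = k+3" using Suc.IH[OF _ u2] Suc(2) True by simp
      have pn: "ps u1 \<noteq> ps u2" using ps_inj u1 u2 u12 by blast
      have s1: "ps u1 = (k+3, True) \<or> ps u1 = (inv \<sigma> (k+3), False)" using sides_at[OF ps_SD[OF u1(1)] p1] .
      have s2: "ps u2 = (k+3, True) \<or> ps u2 = (inv \<sigma> (k+3), False)" using sides_at[OF ps_SD[OF u2(1)] p2] .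
      have sz3: "sec z = k+3" using Suc(4) by simp
      have sz: "z = (k+3, True) \<or> z = (inv \<sigma> (k+3), False)" using sides_at[OF Suc(3) sz3] .
      have "z = ps u1 \<or> z = ps u2" using s1 s2 sz pn by auto
      then have "ps z = u1 \<or> ps z = u2" using ps_ps[OF u1(1)] ps_ps[OF u2(1)] by auto
      then show ?thesis using u1 u2 True by auto
    next
      case False
      have "sec (ps z) = k + 4 \<or> sec (ps z) = k + 2" using nbr_mid[OF Suc(3) Suc(4)] Suc(2) by auto
      moreover have "sec (ps z) \<noteq> k + 2"
      proof
        assume a: "sec (ps z) = k + 2"
        have "sec (ps (ps z)) = k + 1" using Suc.IH[OF _ ps_SD[OF Suc(3)] a] Suc(2) False by simp
        then show False using ps_ps[OF Suc(3)] Suc(4) by simp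
      qed
      ultimately show ?thesis using False by simp
    qed
  qed
  define k where "k = 2*n - 2"
  have kk: "k + 2 = 2*n" "even k" using npos by (auto simp: k_def)
  define u1 where "u1 = (2*n, True)"
  define u2 where "u2 = (inv \<sigma> (2*n), False)"
  have u1: "u1 \<in> SD" "sec u1 = k+2" using plus_SD[of "2*n"] kk npos u1_def by auto
  have u2: "u2 \<in> SD" "sec u2 = k+2" using minus_SD[of "2*n"] kk npos u2_def by auto
  have "sec (ps u1) = 2*n+1" using E[OF _ u1] kk by simp
  then have "ps u1 = (inv \<sigma> (2*n+1), False)" using atN ps_SD u1 by blast
  moreover have "sec (ps u2) = 2*n+1" using E[OF _ u2] kk by simp
  then have "ps u2 = (inv \<sigma> (2*n+1), False)" using atN ps_SD u2 by blast
  ultimately have "u1 = u2" using ps_inj u1 u2 by metis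
  then show False by (simp add: u1_def u2_def)
qed

lemma walk:
  "k + 1 \<le> 2*n \<Longrightarrow> \<exists>z\<in>SD. sec z = k + 1 \<and> sec (ps z) = k + 2 \<and> ((\<omega> (k+1) = \<omega> 1) = snd z) \<and>
      (\<forall>z'\<in>SD. sec z' = k + 1 \<longrightarrow> z' \<noteq> z \<longrightarrow> sec (ps z') = k)"
proof (induction k)
  case 0
  have z1: "(1, True) \<in> SD" "sec (1, True) = 1" using npos by (auto simp: SD_def sec_def)
  have "gamma_consec \<gamma> 1 (sec (ps (1, True)))" using ps_cons[OF z1(1)] z1(2) by simp
  then have "sec (ps (1, True)) = 2 \<or> sec (ps (1, True)) = 2*n+1"
    using cons_iff[of 1 "sec (ps (1, True))"] psec_range[OF z1(1)] npos by auto
  then have "sec (ps (1, True)) = 2" using parity by simp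
  moreover have "\<forall>z'\<in>SD. sec z' = 0 + 1 \<longrightarrow> z' \<noteq> (1, True) \<longrightarrow> sec (ps z') = 0"
    using at1 by fastforce
  ultimately show ?case using z1 by (intro bexI[of _ "(1, True)"]) simp_all
next
  case (Suc k)
  obtain z where z: "z \<in> SD" "sec z = k + 1" "sec (ps z) = k + 2" "(\<omega> (k+1) = \<omega> 1) = snd z"
    and oth: "\<forall>z'\<in>SD. sec z' = k + 1 \<longrightarrow> z' \<noteq> z \<longrightarrow> sec (ps z') = k"
    using Suc.IH Suc.prems by fastforce
  define w where "w = ps z"
  have w: "w \<in> SD" "sec w = k + 2" using ps_SD z w_def by auto
  define w' where "w' = (if snd w then (inv \<sigma> (k+2), False) else (k+2, True))"
  have wsides: "w = (k+2, True) \<or> w = (inv \<sigma> (k+2), False)" using sides_at[OF w] .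
  have pl: "(k+2, True) \<in> SD \<and> sec (k+2, True) = k+2" using plus_SD[of "k+2"] Suc(2) by auto
  have mi: "(inv \<sigma> (k+2), False) \<in> SD \<and> sec (inv \<sigma> (k+2), False) = k+2" using minus_SD[of "k+2"] Suc(2) by auto
  have w': "w' \<in> SD" "sec w' = k+2" "w' \<noteq> w" "snd w' = (\<not> snd w)"
    using pl mi wsides unfolding w'_def by auto
  have "sec (ps w') = k + 3 \<or> sec (ps w') + 1 = k + 2" using nbr_mid[OF w'(1) w'(2)] Suc(2) by auto
  moreover have "sec (ps w') \<noteq> k + 1"
  proof
    assume a: "sec (ps w') = k + 1"
    show False
    proof (cases "ps w' = z")
      case True
      then have "w' = w" using ps_ps[OF w'(1)] w_def by metis
      then show False using w' by simp
    next
      case False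
      then have "sec (ps (ps w')) = k" using oth ps_SD[OF w'(1)] a by blast
      then show False using ps_ps[OF w'(1)] w' by simp
    qed
  qed
  ultimately have nx: "sec (ps w') = Suc k + 2" by auto
  have wz: "\<omega> (k+2) = (if snd w = snd z then - \<omega> (k+1) else \<omega> (k+1))"
    using ps_w[OF z(1)] z(2) w(2) w_def by simp
  have pm1: "\<omega> (k+1) = 1 \<or> \<omega> (k+1) = -1" using w_pm[of "k+1"] Suc.prems by simp
  have pm2: "\<omega> 1 = 1 \<or> \<omega> 1 = -1" using w_pm[of 1] by simp
  have om: "(\<omega> (Suc k + 1) = \<omega> 1) = snd w'"
    using wz pm1 pm2 z(4) w'(4) by auto
  have ot: "\<forall>z'\<in>SD. sec z' = Suc k + 1 \<longrightarrow> z' \<noteq> w' \<longrightarrow> sec (ps z') = Suc k"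
  proof (intro ballI impI)
    fix z' assume z': "z' \<in> SD" "sec z' = Suc k + 1" "z' \<noteq> w'"
    have "z' = (k+2, True) \<or> z' = (inv \<sigma> (k+2), False)" using sides_at[OF z'(1)] z'(2) by simp
    then have "z' = w" using wsides z'(3) unfolding w'_def by auto
    then show "sec (ps z') = Suc k" using w_def ps_ps[OF z(1)] z(2) by simp
  qed
  show ?case using w' nx om ot by (intro bexI[of _ w']) auto
qed

lemma G_plus:
  assumes h: "h \<in> {1..2*n}"
  shows "(sec (ps (h, True)) = h + 1 \<and> \<omega> h = \<omega> 1) \<or> (sec (ps (h, True)) + 1 = h \<and> \<omega> h = - \<omega> 1)"
proof -
  obtain z where z: "z \<in> SD" "sec z = h" "sec (ps z) = h + 1" "(\<omega> h = \<omega> 1) = snd z"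
    and oth: "\<forall>z'\<in>SD. sec z' = h \<longrightarrow> z' \<noteq> z \<longrightarrow> sec (ps z') = h - 1"
    using walk[of "h - 1"] h by auto
  have p: "(h, True) \<in> SD" "sec (h, True) = h" using plus_SD h by auto
  show ?thesis
  proof (cases "z = (h, True)")
    case True
    then show ?thesis using z by auto
  next
    case False
    then have "z = (inv \<sigma> h, False)" using sides_at[OF z(1) z(2)] by auto
    then have "\<omega> h \<noteq> \<omega> 1" using z(4) by simp
    then have "\<omega> h = - \<omega> 1" using w_pm[of h] w_pm[of 1] h by auto
    moreover have "sec (ps (h, True)) = h - 1" using oth p False by auto
    ultimately show ?thesis using h by auto
  qed
qed

lemma G_minus:
  assumes h: "h \<in> {1..2*n}"
  shows "(sec (ps (h, False)) + 1 = \<sigma> h \<and> \<omega> (\<sigma> h) = \<omega> 1) \<or> (sec (ps (h, False)) = \<sigma> h + 1 \<and> \<omega> (\<sigma> h) = - \<omega> 1)"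
proof -
  define t where "t = \<sigma> h"
  have hS: "(h, False) \<in> SD" "sec (h, False) = t" using h by (auto simp: SD_def sec_def t_def)
  have tr: "t \<in> {1..2*n+1}" using sig_in[of h] h t_def by auto
  have t1: "t \<noteq> 1" using at1[OF hS(1)] hS(2) by auto
  have ih: "inv \<sigma> t = h" using t_def sig_inv1 by simp
  show ?thesis
  proof (cases "t = 2*n+1")
    case True
    have "gamma_consec \<gamma> t (sec (ps (h, False)))" using ps_cons[OF hS(1)] hS(2) by simp
    then have "sec (ps (h, False)) = 2*n \<or> sec (ps (h, False)) = 1"
      using cons_iff[of t "sec (ps (h, False))"] psec_range[OF hS(1)] True npos by auto
    moreover have "sec (ps (h, False)) \<noteq> 1"
    proof
      assume "sec (ps (h, False)) = 1"
      then have "ps (h, False) = (1, True)" using at1 ps_SD[OF hS(1)] by blast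
      then have "(h, False) = ps (1, True)" using ps_ps[OF hS(1)] by metis
      then show False using parity hS(2) True by simp
    qed
    ultimately have "sec (ps (h, False)) = 2*n" by simp
    moreover have "\<omega> t = \<omega> 1" using True w1N by simp
    ultimately show ?thesis unfolding t_def[symmetric] using True by simp
  next
    case False
    obtain z where z: "z \<in> SD" "sec z = t" "sec (ps z) = t + 1" "(\<omega> t = \<omega> 1) = snd z"
      and oth: "\<forall>z'\<in>SD. sec z' = t \<longrightarrow> z' \<noteq> z \<longrightarrow> sec (ps z') = t - 1"
      using walk[of "t - 1"] tr t1 False by auto
    show ?thesis
    proof (cases "z = (h, False)")
      case True
      then have "\<omega> t \<noteq> \<omega> 1" using z(4) by simp
      then have "\<omega> t = - \<omega> 1" using w_pm[of t] w_pm[of 1] tr by auto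
      then show ?thesis unfolding t_def[symmetric] using z True by simp
    next
      case False
      then have "z = (t, True)" using sides_at[OF z(1) z(2)] ih by auto
      then have "\<omega> t = \<omega> 1" using z(4) by simp
      moreover have "sec (ps (h, False)) = t - 1" using oth hS False by blast
      moreover have "t - 1 + 1 = t" using tr by simp
      ultimately show ?thesis unfolding t_def[symmetric] by simp
    qed
  qed
qed

end

lemma status:
  fixes a b c d a' b' c' d' :: int
  assumes pm: "a = 1 \<or> a = -1" "b = 1 \<or> b = -1" "c = 1 \<or> c = -1" "d = 1 \<or> d = -1"
    "a' = 1 \<or> a' = -1" "b' = 1 \<or> b' = -1" "c' = 1 \<or> c' = -1" "d' = 1 \<or> d' = -1"
    and eq: "a * b = c * d"
  shows "((a = - b \<and> c = - d) \<and> (a' = b' \<and> c' = d') \<or> (a = b \<and> c = d) \<and> (a' = - b' \<and> c' = - d'))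
     = (a * b \<noteq> a' * b' \<and> c * d \<noteq> c' * d')"
proof -
  have e1: "(x = y) = (x * y = 1)" "(x = - y) = (x * y = -1)" "x * y = 1 \<or> x * y = -1"
    if "x = 1 \<or> x = -1" "y = 1 \<or> y = -1" for x y :: int
    using that by auto
  have key: "((p = -1 \<and> q = -1) \<and> (p' = 1 \<and> q' = 1) \<or> (p = 1 \<and> q = 1) \<and> (p' = -1 \<and> q' = -1)) = (p \<noteq> p' \<and> q \<noteq> q')"
    if "p = 1 \<or> p = -1" "q = 1 \<or> q = -1" "p' = 1 \<or> p' = -1" "q' = 1 \<or> q' = -1" "p = q" for p q p' q' :: int
    using that by auto
  show ?thesis
    unfolding e1(1,2)[OF pm(1,2)] e1(1,2)[OF pm(3,4)] e1(1,2)[OF pm(5,6)] e1(1,2)[OF pm(7,8)]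
    by (rule key[OF e1(3)[OF pm(1,2)] e1(3)[OF pm(3,4)] e1(3)[OF pm(5,6)] e1(3)[OF pm(7,8)] eq])
qed

context ufg
begin

lemma sig_permutation: "permutation \<sigma>"
  using sig_perm permutation_permutes by blast

lemma inv_sig_in: "x \<in> {1..2*n+1} \<Longrightarrow> inv \<sigma> x \<in> {1..2*n+1}"
  using permutes_in_image[OF permutes_inv[OF sig_perm]] by blast

lemma tr_in: "i \<in> {1..2*n+1} \<Longrightarrow> j \<in> {1..2*n+1} \<Longrightarrow> x \<in> {1..2*n+1} \<Longrightarrow> transpose i j x \<in> {1..2*n+1}"
  by (auto simp: transpose_def)

lemma change_all:
  assumes rev: "reversal n \<sigma> \<omega> i j \<sigma>' \<omega>' \<tau>"
  shows "\<forall>h\<in>{1..2*n}. ((\<omega> h * \<omega> (\<sigma> h) \<noteq> \<omega>' (\<tau> h) * \<omega>' (\<sigma>' (\<tau> h))) =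
           (inn i j (\<omega> i = \<omega> 1) (\<omega> j \<noteq> \<omega> 1) h \<noteq> inn i j (\<omega> i \<noteq> \<omega> 1) (\<omega> j = \<omega> 1) (\<sigma> h)))
         \<and> \<tau> h \<in> {1..2*n+1} \<and> \<sigma>' (\<tau> h) \<in> {1..2*n+1}"
    and "\<forall>x\<in>{1..2*n+1}. \<omega>' x = 1 \<or> \<omega>' x = -1"
proof -
  let ?S = "{1..2*n+1}"
  have ij: "i \<in> ?S" "j \<in> ?S" "i < j" using rev by (auto simp: reversal_def sectors_def)
  have wS: "\<And>s. s \<in> ?S \<Longrightarrow> \<omega> s = 1 \<or> \<omega> s = -1" using w_pm by blast
  have c: "\<omega> 1 = 1 \<or> \<omega> 1 = -1" using wS[of 1] by simp
  have sgpm: "sg b * (sg b' * v) = 1 \<or> sg b * (sg b' * v) = -1" if "v = 1 \<or> v = -1" for b b' v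
    using that by (auto simp: sg_def)
  have glueK: "(\<forall>h\<in>{1..2*n}. ((\<omega> h * \<omega> (\<sigma> h) \<noteq> \<omega>' (\<tau> h) * \<omega>' (\<sigma>' (\<tau> h))) =
           (inn i j (\<omega> i = \<omega> 1) (\<omega> j \<noteq> \<omega> 1) h \<noteq> inn i j (\<omega> i \<noteq> \<omega> 1) (\<omega> j = \<omega> 1) (\<sigma> h)))
         \<and> \<tau> h \<in> ?S \<and> \<sigma>' (\<tau> h) \<in> ?S) \<and> (\<forall>x\<in>?S. \<omega>' x = 1 \<or> \<omega>' x = -1)"
    if V: "\<forall>h. (\<sigma> h \<in> V) = (h \<in> V)"
      and Vij: "(i \<in> V \<and> j \<notin> V) \<or> (i \<notin> V \<and> j \<in> V) \<or> (i \<notin> V \<and> j \<notin> V)"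
      and fl: "flip_omega V \<omega> i = - flip_omega V \<omega> j"
      and s': "\<sigma>' = cut_sigma i j (flip_sigma V \<sigma>)"
      and t': "\<tau> = cut_tau i j (flip_tau V \<sigma> id)"
      and w': "\<omega>' = reorient_gs (\<omega> 1) i j (flip_omega V \<omega>)"
    for V
  proof (intro conjI ballI)
    fix h assume h: "h \<in> {1..2*n}"
    have hS: "h \<in> ?S" "\<sigma> h \<in> ?S" using h sig_in[of h] by auto
    show "(\<omega> h * \<omega> (\<sigma> h) \<noteq> \<omega>' (\<tau> h) * \<omega>' (\<sigma>' (\<tau> h))) =
           (inn i j (\<omega> i = \<omega> 1) (\<omega> j \<noteq> \<omega> 1) h \<noteq> inn i j (\<omega> i \<noteq> \<omega> 1) (\<omega> j = \<omega> 1) (\<sigma> h))"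
      by (rule glue_change[OF V[rule_format] sig_inv1 ij(3) Vij wS[OF hS(1)] wS[OF hS(2)] wS[OF ij(1)] wS[OF ij(2)] c fl s' t' w'])
    have "\<tau> h = transpose i j (if h \<in> V then \<sigma> h else h)" by (simp add: t' cut_tau_def flip_tau_def)
    then have tS: "\<tau> h \<in> ?S" using tr_in[OF ij(1,2) hS(1)] tr_in[OF ij(1,2) hS(2)] by (cases "h \<in> V") simp_all
    then show "\<tau> h \<in> ?S" .
    show "\<sigma>' (\<tau> h) \<in> ?S" using tS ij tr_in[OF ij(1,2) tS] sig_in inv_sig_in
      unfolding s' cut_sigma_def flip_sigma_def by auto
  next
    fix x assume "x \<in> ?S"
    then show "\<omega>' x = 1 \<or> \<omega>' x = -1"
      unfolding w' reorient_gs_def negate_on_sg flip_omega_sg by (intro sgpm wS)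
  qed
  have ud: "reversal n \<sigma> \<omega> i j \<sigma>' \<omega>' \<tau>" by (rule rev)
  then consider
      (glue) V where "j \<notin> vertex \<sigma> i" "V \<in> {{}, vertex \<sigma> i, vertex \<sigma> j}" "flip_omega V \<omega> i = - flip_omega V \<omega> j"
        "\<sigma>' = cut_sigma i j (flip_sigma V \<sigma>)" "\<tau> = cut_tau i j (flip_tau V \<sigma> id)"
        "\<omega>' = reorient_gs (\<omega> 1) i j (flip_omega V \<omega>)"
    | (slice) "j \<in> vertex \<sigma> i" "\<omega> i = - \<omega> j" "\<sigma>' = cut_sigma i j \<sigma>" "\<tau> = cut_tau i j id"
        "\<omega>' = reorient_gs (\<omega> 1) i j \<omega>"
    | (hf) "j \<in> vertex \<sigma> i" "\<omega> i = \<omega> j"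
        "\<sigma>' = cut_sigma i j (flip_sigma (vertex (cut_sigma i j \<sigma>) j) (cut_sigma i j \<sigma>))"
        "\<tau> = cut_tau i j (flip_tau (vertex (cut_sigma i j \<sigma>) j) (cut_sigma i j \<sigma>) (cut_tau i j id))"
        "\<omega>' = reorient_hf (\<omega> 1) i j (flip_omega (vertex (cut_sigma i j \<sigma>) j) \<omega>)"
    unfolding reversal_def Let_def by blast
  then have all0: "(\<forall>h\<in>{1..2*n}. ((\<omega> h * \<omega> (\<sigma> h) \<noteq> \<omega>' (\<tau> h) * \<omega>' (\<sigma>' (\<tau> h))) =
           (inn i j (\<omega> i = \<omega> 1) (\<omega> j \<noteq> \<omega> 1) h \<noteq> inn i j (\<omega> i \<noteq> \<omega> 1) (\<omega> j = \<omega> 1) (\<sigma> h)))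
         \<and> \<tau> h \<in> ?S \<and> \<sigma>' (\<tau> h) \<in> ?S) \<and> (\<forall>x\<in>?S. \<omega>' x = 1 \<or> \<omega>' x = -1)"
  proof cases
    case glue
    have ji: "i \<notin> vertex \<sigma> j" using vertex_sym[OF sig_permutation glue(1)] .
    have V: "\<forall>h. (\<sigma> h \<in> V) = (h \<in> V)"
      using glue(2) vertex_step[OF sig_permutation] by auto
    have Vij: "(i \<in> V \<and> j \<notin> V) \<or> (i \<notin> V \<and> j \<in> V) \<or> (i \<notin> V \<and> j \<notin> V)"
      using glue(1,2) ji vertex_self[of i \<sigma>] vertex_self[of j \<sigma>] by auto
    show ?thesis by (rule glueK[OF V Vij glue(3-6)])
  next
    case slice
    have e1: "flip_sigma {} \<sigma> = \<sigma>" by (simp add: flip_sigma_def fun_eq_iff)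
    have e2: "flip_tau {} \<sigma> id = id" by (simp add: flip_tau_def fun_eq_iff)
    have e3: "flip_omega {} \<omega> = \<omega>" by (simp add: flip_omega_def fun_eq_iff)
    have s': "\<sigma>' = cut_sigma i j (flip_sigma {} \<sigma>)" using slice(3) e1 by simp
    have t': "\<tau> = cut_tau i j (flip_tau {} \<sigma> id)" using slice(4) e2 by simp
    have w': "\<omega>' = reorient_gs (\<omega> 1) i j (flip_omega {} \<omega>)" using slice(5) e3 by simp
    have fl: "flip_omega {} \<omega> i = - flip_omega {} \<omega> j" using slice(2) e3 by simp
    have V: "\<forall>h. (\<sigma> h \<in> {}) = (h \<in> {})" by simp
    have Vij: "(i \<in> {} \<and> j \<notin> {}) \<or> (i \<notin> {} \<and> j \<in> {}) \<or> (i \<notin> {} \<and> j \<notin> {})" by simp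
    show ?thesis by (rule glueK[OF V Vij fl s' t' w'])
  next
    case hf
    define \<sigma>1 where "\<sigma>1 = cut_sigma i j \<sigma>"
    define W where "W = vertex \<sigma>1 j"
    have s1p: "\<sigma>1 permutes ?S"
      unfolding \<sigma>1_def cut_sigma_def by (rule permutes_compose[OF permutes_swap_id[OF ij(1,2)] sig_perm])
    have s1perm: "permutation \<sigma>1" using s1p permutation_permutes by blast
    have s1e: "\<sigma>1 = \<sigma> \<circ> transpose i j" by (simp add: \<sigma>1_def cut_sigma_def)
    have iW: "i \<notin> W" unfolding W_def s1e using vertex_slice[OF _ hf(1)] ij(3) by simp
    have jW: "j \<in> W" unfolding W_def by (rule vertex_self)
    show ?thesis
    proof (intro conjI ballI)
      fix h assume h: "h \<in> {1..2*n}"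
      have hS: "h \<in> ?S" "\<sigma> h \<in> ?S" using h sig_in[of h] by auto
      have st: "\<sigma> h = \<sigma>1 (transpose i j h)" by (simp add: s1e)
      have Wc: "(\<sigma> h \<in> W) = (transpose i j h \<in> W)"
        unfolding st W_def by (rule vertex_step[OF s1perm])
      have invs: "inv (\<sigma> \<circ> transpose i j) (\<sigma> h) = transpose i j h"
      proof -
        have "inv \<sigma>1 (\<sigma>1 (transpose i j h)) = transpose i j h" by (rule permutes_inverses(2)[OF s1p])
        then have "inv \<sigma>1 (\<sigma> h) = transpose i j h" by (simp only: st)
        then show ?thesis by (simp only: s1e)
      qed
      show "(\<omega> h * \<omega> (\<sigma> h) \<noteq> \<omega>' (\<tau> h) * \<omega>' (\<sigma>' (\<tau> h))) =
           (inn i j (\<omega> i = \<omega> 1) (\<omega> j \<noteq> \<omega> 1) h \<noteq> inn i j (\<omega> i \<noteq> \<omega> 1) (\<omega> j = \<omega> 1) (\<sigma> h))"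
        by (rule hf_change[OF Wc invs ij(3) iW jW wS[OF hS(1)] wS[OF hS(2)] wS[OF ij(1)] wS[OF ij(2)] c hf(2)
              hf(3)[folded \<sigma>1_def W_def, unfolded \<sigma>1_def] hf(4)[folded \<sigma>1_def W_def, unfolded \<sigma>1_def]
              hf(5)[folded \<sigma>1_def W_def]])
      have s1S: "y \<in> ?S \<Longrightarrow> \<sigma>1 y \<in> ?S" for y using permutes_in_image[OF s1p] by blast
      have s1iS: "y \<in> ?S \<Longrightarrow> inv \<sigma>1 y \<in> ?S" for y using permutes_in_image[OF permutes_inv[OF s1p]] by blast
      have tS: "\<tau> h \<in> ?S" using hS ij s1S tr_in[OF ij(1,2)]
        unfolding hf(4)[folded \<sigma>1_def W_def] cut_tau_def flip_tau_def by auto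
      then show "\<tau> h \<in> ?S" .
      show "\<sigma>' (\<tau> h) \<in> ?S" using tS s1S s1iS tr_in[OF ij(1,2) tS]
        unfolding hf(3)[folded \<sigma>1_def W_def] cut_sigma_def flip_sigma_def by auto
    next
      fix x assume "x \<in> ?S"
      then show "\<omega>' x = 1 \<or> \<omega>' x = -1"
        unfolding hf(5) reorient_hf_def negate_on_sg flip_omega_sg by (intro sgpm wS)
    qed
  qed
  note all = all0
  show "\<forall>h\<in>{1..2*n}. ((\<omega> h * \<omega> (\<sigma> h) \<noteq> \<omega>' (\<tau> h) * \<omega>' (\<sigma>' (\<tau> h))) =
           (inn i j (\<omega> i = \<omega> 1) (\<omega> j \<noteq> \<omega> 1) h \<noteq> inn i j (\<omega> i \<noteq> \<omega> 1) (\<omega> j = \<omega> 1) (\<sigma> h)))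
         \<and> \<tau> h \<in> {1..2*n+1} \<and> \<sigma>' (\<tau> h) \<in> {1..2*n+1}"
    and "\<forall>x\<in>{1..2*n+1}. \<omega>' x = 1 \<or> \<omega>' x = -1"
     apply -
     apply (rule conjunct1[OF all])
    apply (rule conjunct2[OF all])
    done
qed

end

context ufg
begin

lemma main:
  assumes rev: "reversal n \<sigma> \<omega> i j \<sigma>' \<omega>' \<tau>" and r: "r \<in> ribbons n \<epsilon>"
  shows "((m_ribbon \<sigma> \<omega> r \<and> b_ribbon \<sigma>' \<omega>' (\<tau> ` r)) \<or>
          (b_ribbon \<sigma> \<omega> r \<and> m_ribbon \<sigma>' \<omega>' (\<tau> ` r)))
         \<longleftrightarrow> intersects \<sigma> r i j"
proof -
  obtain x where x: "x \<in> {1..2*n}" and rr: "r = {x, \<epsilon> x}" using r unfolding ribbons_def by auto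
  define y where "y = \<epsilon> x"
  have y: "y \<in> {1..2*n}" "y \<noteq> x" "\<epsilon> y = x" using eps[OF x] y_def by auto
  have r2: "r = {x, y}" using rr y_def by simp
  have ij: "i \<in> {1..2*n+1}" "j \<in> {1..2*n+1}" "i < j" using rev by (auto simp: reversal_def sectors_def)
  have CH: "\<forall>h\<in>{1..2*n}. ((\<omega> h * \<omega> (\<sigma> h) \<noteq> \<omega>' (\<tau> h) * \<omega>' (\<sigma>' (\<tau> h))) =
           (inn i j (\<omega> i = \<omega> 1) (\<omega> j \<noteq> \<omega> 1) h \<noteq> inn i j (\<omega> i \<noteq> \<omega> 1) (\<omega> j = \<omega> 1) (\<sigma> h)))
         \<and> \<tau> h \<in> {1..2*n+1} \<and> \<sigma>' (\<tau> h) \<in> {1..2*n+1}"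
    by (rule change_all(1)[OF rev])
  have WP: "\<forall>x\<in>{1..2*n+1}. \<omega>' x = 1 \<or> \<omega>' x = -1" by (rule change_all(2)[OF rev])
  note cx = CH[rule_format, OF x] and cy = CH[rule_format, OF y(1)]
  have sx: "\<sigma> x \<in> {1..2*n+1}" using sig_in[of x] x by auto
  have sy: "\<sigma> y \<in> {1..2*n+1}" using sig_in[of y] y by auto
  have wx: "\<omega> x = 1 \<or> \<omega> x = -1" using w_pm[of x] x by auto
  have wy: "\<omega> y = 1 \<or> \<omega> y = -1" using w_pm[of y] y by auto
  have wsx: "\<omega> (\<sigma> x) = 1 \<or> \<omega> (\<sigma> x) = -1" using w_pm sx by blast
  have wsy: "\<omega> (\<sigma> y) = 1 \<or> \<omega> (\<sigma> y) = -1" using w_pm sy by blast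
  have w'1: "\<omega>' (\<tau> x) = 1 \<or> \<omega>' (\<tau> x) = -1" using WP cx by blast
  have w'2: "\<omega>' (\<sigma>' (\<tau> x)) = 1 \<or> \<omega>' (\<sigma>' (\<tau> x)) = -1" using WP cx by blast
  have w'3: "\<omega>' (\<tau> y) = 1 \<or> \<omega>' (\<tau> y) = -1" using WP cy by blast
  have w'4: "\<omega>' (\<sigma>' (\<tau> y)) = 1 \<or> \<omega>' (\<sigma>' (\<tau> y)) = -1" using WP cy by blast
  have sxy: "\<omega> x * \<omega> (\<sigma> x) = \<omega> y * \<omega> (\<sigma> y)"
    using rib[OF x] unfolding y_def[symmetric] untwisted_ribbon_def twisted_ribbon_def
    by (auto simp: algebra_simps)
  have m1: "m_ribbon \<sigma> \<omega> r = (\<omega> x = - \<omega> (\<sigma> x) \<and> \<omega> y = - \<omega> (\<sigma> y))" by (simp add: m_ribbon_def r2)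
  have b1: "b_ribbon \<sigma> \<omega> r = (\<omega> x = \<omega> (\<sigma> x) \<and> \<omega> y = \<omega> (\<sigma> y))" by (simp add: b_ribbon_def r2)
  have m2: "m_ribbon \<sigma>' \<omega>' (\<tau> ` r) = (\<omega>' (\<tau> x) = - \<omega>' (\<sigma>' (\<tau> x)) \<and> \<omega>' (\<tau> y) = - \<omega>' (\<sigma>' (\<tau> y)))"
    by (simp add: m_ribbon_def r2)
  have b2: "b_ribbon \<sigma>' \<omega>' (\<tau> ` r) = (\<omega>' (\<tau> x) = \<omega>' (\<sigma>' (\<tau> x)) \<and> \<omega>' (\<tau> y) = \<omega>' (\<sigma>' (\<tau> y)))"
    by (simp add: b_ribbon_def r2)
  have LHS: "((m_ribbon \<sigma> \<omega> r \<and> b_ribbon \<sigma>' \<omega>' (\<tau> ` r)) \<or> (b_ribbon \<sigma> \<omega> r \<and> m_ribbon \<sigma>' \<omega>' (\<tau> ` r)))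
     = ((\<omega> x * \<omega> (\<sigma> x) \<noteq> \<omega>' (\<tau> x) * \<omega>' (\<sigma>' (\<tau> x))) \<and> (\<omega> y * \<omega> (\<sigma> y) \<noteq> \<omega>' (\<tau> y) * \<omega>' (\<sigma>' (\<tau> y))))"
    unfolding m1 b1 m2 b2 by (rule status[OF wx wsx wy wsy w'1 w'2 w'3 w'4 sxy])
  have rs: "ribbon_sectors \<sigma> r = {x, \<sigma> x, y, \<sigma> y}" by (auto simp: ribbon_sectors_def r2)
  have L: "ribbon_L \<sigma> r = min (min x (\<sigma> x)) (min y (\<sigma> y))"
    unfolding ribbon_L_def rs by (simp add: min.assoc)
  have R: "ribbon_R \<sigma> r = max (max x (\<sigma> x)) (max y (\<sigma> y))"
    unfolding ribbon_R_def rs by (simp add: max.assoc)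
  have c: "\<omega> 1 = 1 \<or> \<omega> 1 = -1" using w_pm[of 1] by simp
  have xy: "x \<noteq> y" "\<sigma> x \<noteq> \<sigma> y" using y sig_inj by auto
  have tyx: "tw y = tw x" using tw_sym[OF x] y_def by simp
  have gpx: "(sec (ps (x, True)) = x + 1 \<and> \<omega> x = \<omega> 1) \<or> (sec (ps (x, True)) + 1 = x \<and> \<omega> x = - \<omega> 1)" by (rule G_plus[OF x])
  have gpy: "(sec (ps (y, True)) = y + 1 \<and> \<omega> y = \<omega> 1) \<or> (sec (ps (y, True)) + 1 = y \<and> \<omega> y = - \<omega> 1)" by (rule G_plus[OF y(1)])
  have gmx: "(sec (ps (x, False)) + 1 = \<sigma> x \<and> \<omega> (\<sigma> x) = \<omega> 1) \<or> (sec (ps (x, False)) = \<sigma> x + 1 \<and> \<omega> (\<sigma> x) = - \<omega> 1)" by (rule G_minus[OF x])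
  have gmy: "(sec (ps (y, False)) + 1 = \<sigma> y \<and> \<omega> (\<sigma> y) = \<omega> 1) \<or> (sec (ps (y, False)) = \<sigma> y + 1 \<and> \<omega> (\<sigma> y) = - \<omega> 1)" by (rule G_minus[OF y(1)])
  have FIN: "((inn i j (\<omega> i = \<omega> 1) (\<omega> j \<noteq> \<omega> 1) x \<noteq> inn i j (\<omega> i \<noteq> \<omega> 1) (\<omega> j = \<omega> 1) (\<sigma> x)) \<and>
          (inn i j (\<omega> i = \<omega> 1) (\<omega> j \<noteq> \<omega> 1) y \<noteq> inn i j (\<omega> i \<noteq> \<omega> 1) (\<omega> j = \<omega> 1) (\<sigma> y))) =
         ((min (min x (\<sigma> x)) (min y (\<sigma> y)) < i \<and> i < max (max x (\<sigma> x)) (max y (\<sigma> y)) \<and> max (max x (\<sigma> x)) (max y (\<sigma> y)) \<le> j) \<or>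
          (i \<le> min (min x (\<sigma> x)) (min y (\<sigma> y)) \<and> min (min x (\<sigma> x)) (min y (\<sigma> y)) < j \<and> j < max (max x (\<sigma> x)) (max y (\<sigma> y))))"
  proof (cases "tw x")
    case True
    have p1: "sec (ps (x, True)) = y" "sec (ps (x, False)) = \<sigma> y" using True by (simp_all add: ps_def sec_def y_def)
    have p2: "sec (ps (y, True)) = x" "sec (ps (y, False)) = \<sigma> x" using True tyx y(3) by (simp_all add: ps_def sec_def)
    show ?thesis
      by (rule final_tw[OF c ij(3)]) (use gpx gpy gmx gmy p1 p2 in simp_all)
  next
    case False
    have p1: "sec (ps (x, True)) = \<sigma> y" "sec (ps (x, False)) = y" using False by (simp_all add: ps_def sec_def y_def)
    have p2: "sec (ps (y, True)) = \<sigma> x" "sec (ps (y, False)) = x" using False tyx y(3) by (simp_all add: ps_def sec_def)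
    show ?thesis
      by (rule final_untw[OF c ij(3) xy]) (use gpx gpy gmx gmy p1 p2 in simp_all)
  qed
  show ?thesis unfolding LHS intersects_def L R using cx cy FIN by simp
qed

end

theorem lemma2:
  fixes n :: nat and \<sigma> \<gamma> \<epsilon> :: "nat \<Rightarrow> nat" and \<omega> :: "nat \<Rightarrow> int"
    and i j :: nat and \<sigma>' \<tau> :: "nat \<Rightarrow> nat" and \<omega>' :: "nat \<Rightarrow> int" and r :: "nat set"
  assumes "fatgraph n \<sigma> \<gamma> \<omega> \<epsilon>"
    and "unicellular n \<gamma>"
    and "reversal n \<sigma> \<omega> i j \<sigma>' \<omega>' \<tau>"
    and "r \<in> ribbons n \<epsilon>"
  shows "((m_ribbon \<sigma> \<omega> r \<and> b_ribbon \<sigma>' \<omega>' (\<tau> ` r)) \<or>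
          (b_ribbon \<sigma> \<omega> r \<and> m_ribbon \<sigma>' \<omega>' (\<tau> ` r)))
         \<longleftrightarrow> intersects \<sigma> r i j"
proof -
  have "1 \<le> n" using assms(4) unfolding ribbons_def by auto
  then interpret ufg n \<sigma> \<gamma> \<epsilon> \<omega> using assms(1,2) by unfold_locales
  show ?thesis by (rule main[OF assms(3,4)])
qed

end
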